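(* Let $P$ be a quasi-lattice ordered subsemigroup of a group $Q$ and $\Lambda$ an $(r,d)$-proper topological $P$-graph with path space $\Omega$. Let $A\in\Omega$. If $\lambda'\in A$ is extendable in $A$, then every $\lambda\in\Lambda$ with $\lambda\le\lambda'$ is extendable in $A$.
   Context: Quasi-lattice ordered: $P\subset Q$ subsemigroup with $P\cap P^{-1}=\{e\}$ such that two elements with a common upper bound (for $m\le n$ iff $n=mp$, $p\in P$) have a least upper bound. Topological $P$-graph: small category $\Lambda$, vertices $\Lambda^{(0)}\subset\Lambda$, $r,s:\Lambda\to\Lambda^{(0)}$, composition on pairs with $s(\lambda)=r(\mu)$; $\Lambda,\Lambda^{(0)}$ locally compact Hausdorff, $r,s$ continuous, $s$ a local homeomorphism, inclusion continuous, composition continuous and open; continuous multiplicative degree map $d:\Lambda\to P$, equal to $e$ on vertices, with composition $\Lambda^m*\Lambda^n\to\Lambda^{mn}$ a homeomorphism ($\Lambda^m=d^{-1}(m)$). $(r,d)$-proper: $(r,d):\Lambda\to\Lambda^{(0)}\times P$ proper. $\mu\le\lambda$ iff $\lambda=\mu\nu$ for some $\nu$. $\Omega$: nonempty closed hereditary (closed under $\le$-predecessors) directed (any two elements have a common upper bound inside) subsets of $\Lambda$. $E\subset\Lambda$ is exhaustive if for every $\lambda$ with $r(\lambda)\in r(E)$ there is $\mu\in E$ such that $\lambda,\mu$ have a common upper bound. For $A\in\Omega$, $\lambda\in A$ is extendable in $A$ if for every compact exhaustive $E\subset\Lambda$ with $r(E)$ a neighborhood of $s(\lambda)$ there exists $\mu\in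 E$ with $\lambda\mu\in A$. *)

theory Defs
  imports "HOL-Analysis.Analysis"
begin

text \<open>The group Q is a type of class group_add (written additively, not necessarily
commutative): group product is +, identity e is 0, inverse is uminus.\<close>

definition Qle :: "'q::group_add set \<Rightarrow> 'q \<Rightarrow> 'q \<Rightarrow> bool" where
  "Qle P m n \<longleftrightarrow> (\<exists>p\<in>P. n = m + p)"

definition quasi_lattice_ordered :: "'q::group_add set \<Rightarrow> bool" where
  "quasi_lattice_ordered P \<longleftrightarrow>
     (\<forall>a\<in>P. \<forall>b\<in>P. a + b \<in> P) \<and>
     P \<inter> uminus ` P = {0} \<and>
     (\<forall>x y. (\<exists>z. Qle P x z \<and> Qle P y z) \<longrightarrow>
        (\<exists>l. Qle P x l \<and> Qle P y l \<and> (\<forall>z. Qle P x z \<and> Qle P y z \<longrightarrow> Qle P l z)))"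

definition local_homeomorphism :: "'a topology \<Rightarrow> 'b topology \<Rightarrow> ('a \<Rightarrow> 'b) \<Rightarrow> bool" where
  "local_homeomorphism X Y f \<longleftrightarrow>
     (\<forall>x\<in>topspace X. \<exists>U. openin X U \<and> x \<in> U \<and> openin Y (f ` U) \<and>
        homeomorphic_map (subtopology X U) (subtopology Y (f ` U)) f)"

text \<open>Topological P-graph. TL is the topology on Lambda = topspace TL, T0 the topology on
the vertex set Lambda0 = topspace T0 (a subset of Lambda), cmp the (partial) composition.\<close>

definition composable_pairs :: "'l topology \<Rightarrow> ('l \<Rightarrow> 'v) \<Rightarrow> ('l \<Rightarrow> 'v) \<Rightarrow> ('l \<times> 'l) set" where
  "composable_pairs TL r s = {(a, b). a \<in> topspace TL \<and> b \<in> topspace TL \<and> s a = r b}"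

definition top_P_graph ::
  "'q::group_add set \<Rightarrow> 'l topology \<Rightarrow> 'l topology \<Rightarrow> ('l \<Rightarrow> 'l) \<Rightarrow> ('l \<Rightarrow> 'l)
     \<Rightarrow> ('l \<Rightarrow> 'l \<Rightarrow> 'l) \<Rightarrow> ('l \<Rightarrow> 'q) \<Rightarrow> bool" where
  "top_P_graph P TL T0 r s cmp d \<longleftrightarrow>
     \<comment> \<open>small category structure\<close>
     topspace T0 \<subseteq> topspace TL \<and>
     (\<forall>v\<in>topspace T0. r v = v \<and> s v = v) \<and>
     (\<forall>(a, b)\<in>composable_pairs TL r s.
         cmp a b \<in> topspace TL \<and> r (cmp a b) = r a \<and> s (cmp a b) = s b) \<and>
     (\<forall>a\<in>topspace TL. \<forall>b\<in>topspace TL. \<forall>c\<in>topspace TL.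
         s a = r b \<longrightarrow> s b = r c \<longrightarrow> cmp (cmp a b) c = cmp a (cmp b c)) \<and>
     (\<forall>a\<in>topspace TL. cmp (r a) a = a \<and> cmp a (s a) = a) \<and>
     \<comment> \<open>topology\<close>
     Hausdorff_space TL \<and> locally_compact_space TL \<and>
     Hausdorff_space T0 \<and> locally_compact_space T0 \<and>
     continuous_map TL T0 r \<and> continuous_map TL T0 s \<and>
     local_homeomorphism TL T0 s \<and>
     continuous_map T0 TL id \<and>
     continuous_map (subtopology (prod_topology TL TL) (composable_pairs TL r s)) TL
        (\<lambda>(a, b). cmp a b) \<and>
     open_map (subtopology (prod_topology TL TL) (composable_pairs TL r s)) TL
        (\<lambda>(a, b). cmp a b) \<and>
     \<comment> \<open>degree map, P carrying the discrete topology\<close>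
     continuous_map TL (discrete_topology P) d \<and>
     (\<forall>(a, b)\<in>composable_pairs TL r s. d (cmp a b) = d a + d b) \<and>
     (\<forall>v\<in>topspace T0. d v = 0) \<and>
     \<comment> \<open>factorisation: composition Lambda^m * Lambda^n \<rightarrow> Lambda^(mn) is a homeomorphism\<close>
     (\<forall>m\<in>P. \<forall>n\<in>P.
        homeomorphic_map
          (subtopology (prod_topology TL TL)
             {(a, b) \<in> composable_pairs TL r s. d a = m \<and> d b = n})
          (subtopology TL {x \<in> topspace TL. d x = m + n})
          (\<lambda>(a, b). cmp a b))"

definition rd_proper ::
  "'q set \<Rightarrow> 'l topology \<Rightarrow> 'l topology \<Rightarrow> ('l \<Rightarrow> 'l) \<Rightarrow> ('l \<Rightarrow> 'q) \<Rightarrow> bool" where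
  "rd_proper P TL T0 r d \<longleftrightarrow>
     continuous_map TL (prod_topology T0 (discrete_topology P)) (\<lambda>x. (r x, d x)) \<and>
     (\<forall>K. compactin (prod_topology T0 (discrete_topology P)) K \<longrightarrow>
          compactin TL {x \<in> topspace TL. (r x, d x) \<in> K})"

definition path_le :: "'l topology \<Rightarrow> ('l \<Rightarrow> 'l) \<Rightarrow> ('l \<Rightarrow> 'l) \<Rightarrow> ('l \<Rightarrow> 'l \<Rightarrow> 'l)
     \<Rightarrow> 'l \<Rightarrow> 'l \<Rightarrow> bool" where
  "path_le TL r s cmp mu lam \<longleftrightarrow>
     mu \<in> topspace TL \<and> (\<exists>nu\<in>topspace TL. s mu = r nu \<and> lam = cmp mu nu)"

definition common_upper_bound :: "'l topology \<Rightarrow> ('l \<Rightarrow> 'l) \<Rightarrow> ('l \<Rightarrow> 'l) \<Rightarrow> ('l \<Rightarrow> 'l \<Rightarrow> 'l)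
     \<Rightarrow> 'l set \<Rightarrow> 'l \<Rightarrow> 'l \<Rightarrow> bool" where
  "common_upper_bound TL r s cmp B lam mu \<longleftrightarrow>
     (\<exists>nu\<in>B. path_le TL r s cmp lam nu \<and> path_le TL r s cmp mu nu)"

definition path_space :: "'l topology \<Rightarrow> ('l \<Rightarrow> 'l) \<Rightarrow> ('l \<Rightarrow> 'l) \<Rightarrow> ('l \<Rightarrow> 'l \<Rightarrow> 'l)
     \<Rightarrow> 'l set set" where
  "path_space TL r s cmp =
     {A. A \<noteq> {} \<and> A \<subseteq> topspace TL \<and> closedin TL A \<and>
         (\<forall>lam\<in>A. \<forall>mu. path_le TL r s cmp mu lam \<longrightarrow> mu \<in> A) \<and>
         (\<forall>lam\<in>A. \<forall>mu\<in>A. common_upper_bound TL r s cmp A lam mu)}"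

definition exhaustive :: "'l topology \<Rightarrow> ('l \<Rightarrow> 'l) \<Rightarrow> ('l \<Rightarrow> 'l) \<Rightarrow> ('l \<Rightarrow> 'l \<Rightarrow> 'l)
     \<Rightarrow> 'l set \<Rightarrow> bool" where
  "exhaustive TL r s cmp E \<longleftrightarrow> E \<subseteq> topspace TL \<and>
     (\<forall>lam\<in>topspace TL. r lam \<in> r ` E \<longrightarrow>
        (\<exists>mu\<in>E. common_upper_bound TL r s cmp (topspace TL) lam mu))"

definition extendable :: "'l topology \<Rightarrow> 'l topology \<Rightarrow> ('l \<Rightarrow> 'l) \<Rightarrow> ('l \<Rightarrow> 'l)
     \<Rightarrow> ('l \<Rightarrow> 'l \<Rightarrow> 'l) \<Rightarrow> 'l set \<Rightarrow> 'l \<Rightarrow> bool" where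
  "extendable TL T0 r s cmp A lam \<longleftrightarrow> lam \<in> A \<and>
     (\<forall>E. compactin TL E \<longrightarrow> exhaustive TL r s cmp E \<longrightarrow>
        (\<exists>U. openin T0 U \<and> s lam \<in> U \<and> U \<subseteq> r ` E) \<longrightarrow>
        (\<exists>mu\<in>E. s lam = r mu \<and> cmp lam mu \<in> A))"

end

theory Submission
  imports Defs
begin

locale PG =
  fixes P :: "'q::group_add set" and TL T0 :: "'l topology" and r s :: "'l \<Rightarrow> 'l"
    and cmp :: "'l \<Rightarrow> 'l \<Rightarrow> 'l" and d :: "'l \<Rightarrow> 'q"
  assumes qlo: "quasi_lattice_ordered P" and G: "top_P_graph P TL T0 r s cmp d"
begin

abbreviation "L \<equiv> topspace TL"

lemma cmp_props:
  assumes "a \<in> L" "b \<in> L" "s a = r b"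
  shows "cmp a b \<in> L" "r (cmp a b) = r a" "s (cmp a b) = s b" "d (cmp a b) = d a + d b"
  using G assms unfolding top_P_graph_def composable_pairs_def by fastforce+

lemma assoc:
  assumes "a \<in> L" "b \<in> L" "c \<in> L" "s a = r b" "s b = r c"
  shows "cmp (cmp a b) c = cmp a (cmp b c)"
  using G assms unfolding top_P_graph_def by blast

lemma vert: "v \<in> topspace T0 \<Longrightarrow> v \<in> L \<and> r v = v \<and> s v = v"
  using G unfolding top_P_graph_def by blast

lemma unit_r: "a \<in> L \<Longrightarrow> cmp a (s a) = a"
  using G unfolding top_P_graph_def by blast

lemma cont_r: "continuous_map TL T0 r" and cont_s: "continuous_map TL T0 s"
  and cont_d: "continuous_map TL (discrete_topology P) d"
  and loch: "local_homeomorphism TL T0 s"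
  and haus: "Hausdorff_space TL" "Hausdorff_space T0"
  and lc: "locally_compact_space TL"
  and cont_cmp: "continuous_map (subtopology (prod_topology TL TL) (composable_pairs TL r s)) TL
        (\<lambda>(a, b). cmp a b)"
  using G unfolding top_P_graph_def by blast+

lemma hom: "m \<in> P \<Longrightarrow> n \<in> P \<Longrightarrow> homeomorphic_map
          (subtopology (prod_topology TL TL)
             {(a, b) \<in> composable_pairs TL r s. d a = m \<and> d b = n})
          (subtopology TL {x \<in> topspace TL. d x = m + n})
          (\<lambda>(a, b). cmp a b)"
  using G unfolding top_P_graph_def by blast

lemma s_in: "a \<in> L \<Longrightarrow> s a \<in> topspace T0" using cont_s by (auto simp: continuous_map_def Pi_iff)
lemma r_in: "a \<in> L \<Longrightarrow> r a \<in> topspace T0" using cont_r by (auto simp: continuous_map_def Pi_iff)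
lemma d_in: "a \<in> L \<Longrightarrow> d a \<in> P" using cont_d by (auto simp: continuous_map_def Pi_iff)

lemma P_add: "a \<in> P \<Longrightarrow> b \<in> P \<Longrightarrow> a + b \<in> P"
  using qlo unfolding quasi_lattice_ordered_def by blast

lemma factor_ex:
  assumes "x \<in> L" "d x = m + n" "m \<in> P" "n \<in> P"
  obtains a b where "a \<in> L" "b \<in> L" "s a = r b" "d a = m" "d b = n" "x = cmp a b"
proof -
  have "(\<lambda>(a, b). cmp a b) ` topspace (subtopology (prod_topology TL TL)
             {(a, b) \<in> composable_pairs TL r s. d a = m \<and> d b = n})
     = topspace (subtopology TL {x \<in> topspace TL. d x = m + n})"
    using homeomorphic_imp_surjective_map[OF hom[OF assms(3,4)]] .
  then have "x \<in> (\<lambda>(a, b). cmp a b) ` ((L \<times> L) \<inter> {(a, b) \<in> composable_pairs TL r s. d a = m \<and> d b = n})"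
    using assms by auto
  then show ?thesis using that unfolding composable_pairs_def by auto
qed

lemma factor_uniq:
  assumes "a \<in> L" "b \<in> L" "s a = r b" "a' \<in> L" "b' \<in> L" "s a' = r b'"
    "d a = d a'" "cmp a b = cmp a' b'"
  shows "a = a' \<and> b = b'"
proof -
  have db: "d b = d b'" using cmp_props(4)[OF assms(1-3)] cmp_props(4)[OF assms(4-6)] assms(7,8)
    by (metis add_left_cancel)
  have inj: "inj_on (\<lambda>(a, b). cmp a b) (topspace (subtopology (prod_topology TL TL)
             {(x, y) \<in> composable_pairs TL r s. d x = d a \<and> d y = d b}))"
    using homeomorphic_imp_injective_map[OF hom[OF d_in d_in]] assms by blast
  have m1: "(a, b) \<in> topspace (subtopology (prod_topology TL TL)
             {(x, y) \<in> composable_pairs TL r s. d x = d a \<and> d y = d b})"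
    using assms unfolding composable_pairs_def by auto
  have m2: "(a', b') \<in> topspace (subtopology (prod_topology TL TL)
             {(x, y) \<in> composable_pairs TL r s. d x = d a \<and> d y = d b})"
    using assms db unfolding composable_pairs_def by auto
  have "(a, b) = (a', b')" using inj_onD[OF inj _ m1 m2] assms(8) by simp
  then show ?thesis by simp
qed

lemma Qle_antisym: "Qle P a b \<Longrightarrow> Qle P b a \<Longrightarrow> a = b"
proof -
  assume "Qle P a b" "Qle P b a"
  then obtain x y where xy: "x \<in> P" "y \<in> P" "b = a + x" "a = b + y" unfolding Qle_def by blast
  have "b + y = (a + x) + y" using xy(3) by (rule arg_cong)
  then have "a = (a + x) + y" using xy(4) by (rule trans[rotated])
  then have "a + 0 = a + (x + y)" by (simp only: add.assoc add_0_right)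
  then have "x + y = 0" by (simp only: add_left_cancel)
  then have "x = - y" by (simp only: eq_neg_iff_add_eq_0)
  then have "x \<in> P \<inter> uminus ` P" using xy(1,2) by blast
  then have "x = 0" using qlo unfolding quasi_lattice_ordered_def by blast
  then show "a = b" using xy(3) by simp
qed


lemma path_leE:
  assumes "path_le TL r s cmp x y"
  obtains b where "x \<in> L" "b \<in> L" "s x = r b" "y = cmp x b"
  using assms unfolding path_le_def by blast

lemma path_leI:
  assumes "x \<in> L" "b \<in> L" "s x = r b" "y = cmp x b"
  shows "path_le TL r s cmp x y"
  using assms unfolding path_le_def by blast

lemma main:
  assumes rdp: "rd_proper P TL T0 r d" and Ain: "A \<in> path_space TL r s cmp"
    and ext': "extendable TL T0 r s cmp A lam'" and pl: "path_le TL r s cmp lam lam'"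
  shows "extendable TL T0 r s cmp A lam"
proof -
  obtain nu where nu: "lam \<in> L" "nu \<in> L" "s lam = r nu" "lam' = cmp lam nu"
    using pl by (rule path_leE)
  have lam'A: "lam' \<in> A" using ext' unfolding extendable_def by blast
  have hered: "\<And>x y. x \<in> A \<Longrightarrow> path_le TL r s cmp y x \<Longrightarrow> y \<in> A"
    using Ain unfolding path_space_def by blast
  have lamA: "lam \<in> A" using hered[OF lam'A pl] .
  define m where "m = d nu"
  have mP: "m \<in> P" using d_in[OF nu(2)] m_def by simp
  show ?thesis unfolding extendable_def
  proof (intro conjI allI impI lamA)
    fix E assume Ec: "compactin TL E" and Eex: "exhaustive TL r s cmp E"
      and "\<exists>U. openin T0 U \<and> s lam \<in> U \<and> U \<subseteq> r ` E"
    then obtain U where U: "openin T0 U" "s lam \<in> U" "U \<subseteq> r ` E" by blast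
    have EL: "E \<subseteq> L" using Ec by (rule compactin_subset_topspace)
    have Ecl: "closedin TL E" using compactin_imp_closedin[OF haus(1) Ec] .
    have Eex': "\<And>x. x \<in> L \<Longrightarrow> r x \<in> r ` E \<Longrightarrow>
        \<exists>mu\<in>E. \<exists>xi\<in>L. path_le TL r s cmp x xi \<and> path_le TL r s cmp mu xi"
      using Eex unfolding exhaustive_def common_upper_bound_def by blast
    obtain W where W: "openin TL W" "nu \<in> W" "openin T0 (s ` W)"
        "homeomorphic_map (subtopology TL W) (subtopology T0 (s ` W)) s"
      using loch nu(2) unfolding local_homeomorphism_def by blast
    define Onb where "Onb = W \<inter> {x \<in> L. r x \<in> U} \<inter> {x \<in> L. d x \<in> {m}}"
    have Oo: "openin TL Onb" unfolding Onb_def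
      using W(1) openin_continuous_map_preimage[OF cont_r U(1)]
        openin_continuous_map_preimage[OF cont_d, of "{m}"] mP
      by (intro openin_Int) auto
    have nuO: "nu \<in> Onb" unfolding Onb_def using W(2) nu U(2) m_def by auto
    obtain V N where VN: "openin TL V" "compactin TL N" "nu \<in> V" "V \<subseteq> N" "N \<subseteq> Onb"
      using lc haus(1) locally_compact_space_neighbourhood_base[of TL] Oo nuO
      unfolding neighbourhood_base_of by metis
    have NL: "N \<subseteq> L" using VN(2) by (rule compactin_subset_topspace)
    have Nprops: "\<And>x. x \<in> N \<Longrightarrow> x \<in> W \<and> r x \<in> U \<and> d x = m \<and> x \<in> L"
      using VN(5) unfolding Onb_def by auto
    have injW: "inj_on s (L \<inter> W)"
      using homeomorphic_imp_injective_map[OF W(4)] by simp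
    have injN: "inj_on s N" using injW Nprops by (meson IntI inj_on_subset subsetI)
    define SN where "SN = s ` N"
    have SNc: "compactin T0 SN" unfolding SN_def using image_compactin[OF VN(2) cont_s] .
    have SNcl: "closedin T0 SN" using compactin_imp_closedin[OF haus(2) SNc] .
    define sig where "sig = inv_into N s"
    have sigN: "\<And>x. x \<in> N \<Longrightarrow> sig (s x) = x" unfolding sig_def using injN by simp
    have sigin: "\<And>v. v \<in> SN \<Longrightarrow> sig v \<in> N \<and> s (sig v) = v"
      unfolding sig_def SN_def by (simp add: inv_into_into f_inv_into_f)
    have sigcont: "continuous_map (subtopology T0 SN) TL sig"
    proof -
      have "continuous_map (subtopology T0 SN) (subtopology TL N) sig"
      proof (rule continuous_inverse_map)
        show "compact_space (subtopology TL N)" using VN(2) by (rule compact_space_subtopology)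
        show "Hausdorff_space T0" by (rule haus(2))
        show "continuous_map (subtopology TL N) T0 s" using cont_s by (rule continuous_map_from_subtopology)
        show "\<And>x. x \<in> topspace (subtopology TL N) \<Longrightarrow> sig (s x) = x" using sigN by simp
        show "SN \<subseteq> s ` topspace (subtopology TL N)" unfolding SN_def using NL by auto
      qed
      then show ?thesis by (rule continuous_map_into_fulltopology)
    qed
    have sV: "openin T0 (s ` V)"
    proof -
      have om: "open_map (subtopology TL W) (subtopology T0 (s ` W)) s"
        using W(4) by (rule homeomorphic_imp_open_map)
      have "openin (subtopology TL W) V"
        unfolding openin_subtopology using VN Nprops by blast
      then have "openin (subtopology T0 (s ` W)) (s ` V)" using om unfolding open_map_def by blast
      then show ?thesis using W(3) by (rule openin_trans_full)
    qed
    define F where "F = d ` E"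
    have Fc: "compactin (discrete_topology P) F" unfolding F_def using image_compactin[OF Ec cont_d] .
    then have Ffin: "finite F" and FP: "F \<subseteq> P" by (auto simp: compactin_discrete_topology)
    define islub where "islub a b l \<longleftrightarrow> Qle P a l \<and> Qle P b l \<and> (\<forall>z. Qle P a z \<and> Qle P b z \<longrightarrow> Qle P l z)" for a b l
    have lub_ex: "\<And>a b z. Qle P a z \<Longrightarrow> Qle P b z \<Longrightarrow> \<exists>l. islub a b l"
      using qlo unfolding quasi_lattice_ordered_def islub_def by blast
    have lub_uniq: "\<And>a b l l'. islub a b l \<Longrightarrow> islub a b l' \<Longrightarrow> l = l'"
      unfolding islub_def using Qle_antisym by blast
    define F' where "F' = {q \<in> P. \<exists>p\<in>F. islub m p (m + q)}"
    have F'P: "F' \<subseteq> P" unfolding F'_def by blast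
    have F'fin: "finite F'"
    proof (rule finite_subset[OF _ finite_imageI[OF Ffin]])
      show "F' \<subseteq> (\<lambda>p. - m + (SOME l. islub m p l)) ` F"
      proof
        fix q assume "q \<in> F'"
        then obtain p where p: "p \<in> F" "islub m p (m + q)" unfolding F'_def by blast
        then have "islub m p (SOME l. islub m p l)" by (meson someI)
        then have "(SOME l. islub m p l) = m + q" using lub_uniq p(2) by blast
        then have "q = - m + (SOME l. islub m p l)" by (simp add: add.assoc[symmetric])
        then show "q \<in> (\<lambda>p. - m + (SOME l. islub m p l)) ` F" using p(1) by blast
      qed
    qed
    define E' where "E' = {al \<in> L. r al \<in> SN \<and> d al \<in> F' \<and>
       (\<exists>mu\<in>E. path_le TL r s cmp mu (cmp (sig (r al)) al))}"
    have E'L: "E' \<subseteq> L" unfolding E'_def by blast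
    have key: "\<And>nu' ga mu xi. nu' \<in> N \<Longrightarrow> ga \<in> L \<Longrightarrow> s nu' = r ga \<Longrightarrow> mu \<in> E
       \<Longrightarrow> path_le TL r s cmp (cmp nu' ga) xi \<Longrightarrow> path_le TL r s cmp mu xi
       \<Longrightarrow> \<exists>al\<in>E'. r al = s nu' \<and> common_upper_bound TL r s cmp L ga al"
    proof -
      fix nu' ga mu xi
      assume nu': "nu' \<in> N" and ga: "ga \<in> L" "s nu' = r ga" and muE: "mu \<in> E"
        and p1: "path_le TL r s cmp (cmp nu' ga) xi" and p2: "path_le TL r s cmp mu xi"
      have nu'L: "nu' \<in> L" and dnu': "d nu' = m" using Nprops nu' by auto
      have cg: "cmp nu' ga \<in> L" "s (cmp nu' ga) = s ga" "d (cmp nu' ga) = m + d ga"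
        using cmp_props[OF nu'L ga] dnu' by auto
      obtain a where a: "a \<in> L" "s (cmp nu' ga) = r a" "xi = cmp (cmp nu' ga) a"
        using p1 by (auto elim: path_leE)
      obtain b where b: "mu \<in> L" "b \<in> L" "s mu = r b" "xi = cmp mu b"
        using p2 by (rule path_leE)
      have sga: "s ga = r a" using a(2) cg(2) by simp
      have xiL: "xi \<in> L" using cmp_props(1)[OF b(1-3)] b(4) by simp
      have dxi1: "d xi = m + (d ga + d a)"
        using cmp_props(4)[OF cg(1) a(1,2)] a(3) cg(3) by (simp add: add.assoc)
      have dxi2: "d xi = d mu + d b" using cmp_props(4)[OF b(1-3)] b(4) by simp
      have "Qle P m (d xi)" unfolding Qle_def using dxi1 P_add[OF d_in[OF ga(1)] d_in[OF a(1)]] by blast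
      moreover have "Qle P (d mu) (d xi)" unfolding Qle_def using dxi2 d_in[OF b(2)] by blast
      ultimately obtain l where l: "islub m (d mu) l" using lub_ex by blast
      obtain q where q: "q \<in> P" "l = m + q" using l unfolding islub_def Qle_def by blast
      obtain t where t: "t \<in> P" "d xi = l + t"
        using l \<open>Qle P m (d xi)\<close> \<open>Qle P (d mu) (d xi)\<close> unfolding islub_def Qle_def by blast
      obtain w where w: "w \<in> P" "l = d mu + w" using l unfolding islub_def Qle_def by blast
      have lP: "l \<in> P" using q P_add mP by simp
      obtain ze c where zc: "ze \<in> L" "c \<in> L" "s ze = r c" "d ze = l" "d c = t" "xi = cmp ze c"
        using factor_ex[OF xiL t(2) lP t(1)] by blast
      obtain nu'' al where na: "nu'' \<in> L" "al \<in> L" "s nu'' = r al" "d nu'' = m" "d al = q" "ze = cmp nu'' al"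
        using factor_ex[OF zc(1) _ mP q(1)] zc(4) q(2) by blast
      obtain mu'' b' where mb: "mu'' \<in> L" "b' \<in> L" "s mu'' = r b'" "d mu'' = d mu" "d b' = w" "ze = cmp mu'' b'"
        using factor_ex[OF zc(1) _ d_in[OF b(1)] w(1)] zc(4) w(2) by blast
      have sal: "s al = r c" using zc(3) na(6) cmp_props(3)[OF na(1-3)] by simp
      have sb': "s b' = r c" using zc(3) mb(6) cmp_props(3)[OF mb(1-3)] by simp
      have ac: "cmp al c \<in> L" "r (cmp al c) = r al" using cmp_props[OF na(2) zc(2) sal] by auto
      have gaa: "cmp ga a \<in> L" "r (cmp ga a) = r ga" using cmp_props[OF ga(1) a(1) sga] by auto
      have bc: "cmp b' c \<in> L" "r (cmp b' c) = r b'" using cmp_props[OF mb(2) zc(2) sb'] by auto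
      have x1: "xi = cmp nu'' (cmp al c)" using zc(6) na(6) assoc[OF na(1,2) zc(2) na(3) sal] by simp
      have x2: "xi = cmp nu' (cmp ga a)" using a(3) assoc[OF nu'L ga(1) a(1) ga(2) sga] by simp
      have x3: "xi = cmp mu'' (cmp b' c)" using zc(6) mb(6) assoc[OF mb(1,2) zc(2) mb(3) sb'] by simp
      have u1: "nu'' = nu' \<and> cmp al c = cmp ga a"
        using factor_uniq[OF na(1) ac(1) _ nu'L gaa(1)] na(3,4) ac(2) gaa(2) ga(2) dnu' x1 x2 by simp
      have u2: "mu'' = mu \<and> cmp b' c = b"
        using factor_uniq[OF mb(1) bc(1) _ b(1,2,3)] mb(3,4) bc(2) x3 b(4) by simp
      have ral: "r al = s nu'" using na(3) u1 by simp
      have sig_al: "sig (r al) = nu'" using ral sigN nu' by simp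
      have "al \<in> E'" unfolding E'_def
      proof (intro CollectI conjI)
        show "al \<in> L" by (rule na(2))
        show "r al \<in> SN" using ral nu' SN_def by simp
        show "d al \<in> F'" unfolding F'_def using na(5) q l muE F_def by auto
        have "path_le TL r s cmp mu ze" using mb u2 b(1) by (intro path_leI) auto
        then show "\<exists>mu\<in>E. path_le TL r s cmp mu (cmp (sig (r al)) al)"
          using muE sig_al na(6) u1 by auto
      qed
      moreover have "common_upper_bound TL r s cmp L ga al"
        unfolding common_upper_bound_def
        using gaa(1) path_leI[OF ga(1) a(1) sga refl] path_leI[OF na(2) zc(2) sal refl] u1 by auto
      ultimately show "\<exists>al\<in>E'. r al = s nu' \<and> common_upper_bound TL r s cmp L ga al" using ral by blast
    qed
    have E'ex: "exhaustive TL r s cmp E'"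
      unfolding exhaustive_def
    proof (intro conjI ballI impI E'L)
      fix ga assume gaL: "ga \<in> L" and "r ga \<in> r ` E'"
      then have rga: "r ga \<in> SN" unfolding E'_def by auto
      define nu' where "nu' = sig (r ga)"
      have nu': "nu' \<in> N" "s nu' = r ga" using sigin[OF rga] nu'_def by auto
      have nu'L: "nu' \<in> L" using Nprops nu'(1) by blast
      have cg: "cmp nu' ga \<in> L" "r (cmp nu' ga) = r nu'" using cmp_props[OF nu'L gaL nu'(2)] by auto
      have "r (cmp nu' ga) \<in> r ` E" using cg(2) Nprops[OF nu'(1)] U(3) by auto
      then obtain mu xi where "mu \<in> E" "path_le TL r s cmp (cmp nu' ga) xi" "path_le TL r s cmp mu xi"
        using Eex'[OF cg(1)] by blast
      then show "\<exists>al\<in>E'. common_upper_bound TL r s cmp L ga al"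
        using key[OF nu'(1) gaL nu'(2)] by blast
    qed
    have E'c: "compactin TL E'"
    proof -
      have "compactin (prod_topology T0 (discrete_topology P)) (SN \<times> F')"
        using SNc F'fin F'P by (simp add: compactin_Times compactin_discrete_topology)
      then have Cc: "compactin TL {x \<in> L. (r x, d x) \<in> SN \<times> F'}"
        using rdp unfolding rd_proper_def by blast
      have sub: "E' \<subseteq> {x \<in> L. (r x, d x) \<in> SN \<times> F'}" unfolding E'_def by auto
      define H where "H p n = (\<lambda>(a, b). cmp a b) ` {(mu, be). mu \<in> E \<and> be \<in> L \<and> s mu = r be \<and> d mu = p \<and> d be = n}" for p n
      define B where "B pq = {al \<in> L. r al \<in> SN \<and> d al = snd pq \<and> snd pq \<in> F' \<and>
           cmp (sig (r al)) al \<in> H (fst pq) (- fst pq + (m + snd pq))}" for pq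
      have eq: "E' = \<Union> (B ` (F \<times> F'))"
      proof
        show "E' \<subseteq> \<Union> (B ` (F \<times> F'))"
        proof
          fix al assume "al \<in> E'"
          then obtain mu where al: "al \<in> L" "r al \<in> SN" "d al \<in> F'" "mu \<in> E"
              "path_le TL r s cmp mu (cmp (sig (r al)) al)"
            unfolding E'_def by blast
          then obtain be where be: "mu \<in> L" "be \<in> L" "s mu = r be" "cmp (sig (r al)) al = cmp mu be"
            by (auto elim: path_leE)
          have sg: "sig (r al) \<in> N" "s (sig (r al)) = r al" using sigin[OF al(2)] by auto
          have "d (cmp (sig (r al)) al) = m + d al"
            using cmp_props(4)[OF _ al(1) sg(2)] sg(1) Nprops by auto
          then have "d mu + d be = m + d al" using be(4) cmp_props(4)[OF be(1-3)] by simp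
          then have "d be = - d mu + (m + d al)" by (metis minus_add_cancel)
          then have "cmp (sig (r al)) al \<in> H (d mu) (- d mu + (m + d al))"
            unfolding H_def using be al(4) by force
          then have "al \<in> B (d mu, d al)" unfolding B_def using al by auto
          moreover have "(d mu, d al) \<in> F \<times> F'" using al(3,4) F_def by auto
          ultimately show "al \<in> \<Union> (B ` (F \<times> F'))" by blast
        qed
        show "\<Union> (B ` (F \<times> F')) \<subseteq> E'"
        proof
          fix al assume "al \<in> \<Union> (B ` (F \<times> F'))"
          then obtain pq where "pq \<in> F \<times> F'" "al \<in> B pq" by blast
          then obtain mu be where al: "al \<in> L" "r al \<in> SN" "d al \<in> F'" "mu \<in> E" "be \<in> L"
              "s mu = r be" "cmp (sig (r al)) al = cmp mu be"
            unfolding B_def H_def by auto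
          have "path_le TL r s cmp mu (cmp (sig (r al)) al)"
            using al EL by (intro path_leI) auto
          then show "al \<in> E'" unfolding E'_def using al by blast
        qed
      qed
      have Bcl: "closedin TL (B pq)" if pq: "pq \<in> F \<times> F'" for pq
      proof -
        obtain p q where pq': "pq = (p, q)" "p \<in> F" "q \<in> F'" using pq by auto
        define n where "n = - p + (m + q)"
        show ?thesis
        proof (cases "n \<in> P")
          case False
          have "H p n = {}" unfolding H_def using False d_in by auto
          then have "B pq = {}" unfolding B_def pq' n_def by auto
          then show ?thesis by simp
        next
          case nP: True
          have pP: "p \<in> P" and qP: "q \<in> P" using pq' FP F'P by auto
          have pn: "p + n = m + q" unfolding n_def by (simp add: add.assoc[symmetric])
          define Z where "Z = {al \<in> L. r al \<in> SN} \<inter> {al \<in> L. d al \<in> {q}}"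
          have Zcl: "closedin TL Z" unfolding Z_def
            using closedin_continuous_map_preimage[OF cont_r SNcl]
                  closedin_continuous_map_preimage[OF cont_d, of "{q}"] qP
            by (intro closedin_Int) auto
          define Y where "Y = {x \<in> L. d x = p + n}"
          define Dom where "Dom = {(a, b) \<in> composable_pairs TL r s. d a = p \<and> d b = n}"
          define D where "D = {z \<in> topspace (subtopology (prod_topology TL TL) Dom). fst z \<in> E}"
          have Dcl: "closedin (subtopology (prod_topology TL TL) Dom) D" unfolding D_def
            by (rule closedin_continuous_map_preimage[OF continuous_map_from_subtopology[OF continuous_map_fst] Ecl])
          have HD: "H p n = (\<lambda>(a, b). cmp a b) ` D"
            unfolding H_def D_def Dom_def composable_pairs_def using EL by auto
          have Hcl: "closedin (subtopology TL Y) (H p n)"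
            using homeomorphic_imp_closed_map[OF hom[OF pP nP]] Dcl unfolding HD closed_map_def Dom_def Y_def
            by blast
          have c1: "continuous_map (subtopology TL Z) (subtopology T0 SN) r"
            by (rule continuous_map_into_subtopology[OF continuous_map_from_subtopology[OF cont_r]])
               (auto simp: Z_def)
          have c2: "continuous_map (subtopology TL Z) TL (\<lambda>x. sig (r x))"
            using continuous_map_compose[OF c1 sigcont] by (simp add: o_def)
          have c3: "continuous_map (subtopology TL Z) TL (\<lambda>x. x)"
            using continuous_map_from_subtopology[OF continuous_map_id] by (simp add: id_def)
          have c4: "continuous_map (subtopology TL Z) (subtopology (prod_topology TL TL) (composable_pairs TL r s))
                (\<lambda>x. (sig (r x), x))"
          proof (rule continuous_map_into_subtopology[OF continuous_map_pairedI[OF c2 c3]])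
            show "(\<lambda>x. (sig (r x), x)) \<in> topspace (subtopology TL Z) \<rightarrow> composable_pairs TL r s"
              using sigin Nprops unfolding Z_def composable_pairs_def by auto
          qed
          have c5: "continuous_map (subtopology TL Z) TL (\<lambda>x. cmp (sig (r x)) x)"
            using continuous_map_compose[OF c4 cont_cmp] by (simp add: o_def)
          have c6: "continuous_map (subtopology TL Z) (subtopology TL Y) (\<lambda>x. cmp (sig (r x)) x)"
          proof (rule continuous_map_into_subtopology[OF c5])
            show "(\<lambda>x. cmp (sig (r x)) x) \<in> topspace (subtopology TL Z) \<rightarrow> Y"
            proof
              fix x assume "x \<in> topspace (subtopology TL Z)"
              then have x: "x \<in> L" "r x \<in> SN" "d x = q" unfolding Z_def by auto
              have sg: "sig (r x) \<in> N" "s (sig (r x)) = r x" using sigin[OF x(2)] by auto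
              show "cmp (sig (r x)) x \<in> Y"
                using cmp_props[OF _ x(1) sg(2)] sg(1) Nprops x(3) pn unfolding Y_def by auto
            qed
          qed
          have "closedin (subtopology TL Z) {x \<in> topspace (subtopology TL Z). cmp (sig (r x)) x \<in> H p n}"
            by (rule closedin_continuous_map_preimage[OF c6 Hcl])
          moreover have "{x \<in> topspace (subtopology TL Z). cmp (sig (r x)) x \<in> H p n} = B pq"
            unfolding B_def pq' n_def Z_def using pq' by auto
          ultimately show ?thesis using Zcl closedin_trans_full by metis
        qed
      qed
      have "closedin TL E'" unfolding eq
        using Bcl Ffin F'fin by (intro closedin_Union) auto
      then show ?thesis using closed_compactin[OF Cc sub] by blast
    qed
    have nbh: "s ` V \<subseteq> r ` E'"
    proof
      fix v assume "v \<in> s ` V"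
      then obtain nu' where nu': "nu' \<in> V" "v = s nu'" by blast
      have nu'N: "nu' \<in> N" using nu'(1) VN(4) by blast
      have nu'L: "nu' \<in> L" using Nprops nu'N by blast
      have vt: "s nu' \<in> topspace T0" using s_in[OF nu'L] .
      have gaL: "s nu' \<in> L" and rga: "r (s nu') = s nu'" using vert[OF vt] by auto
      have cg: "cmp nu' (s nu') = nu'" using unit_r[OF nu'L] .
      have "r nu' \<in> r ` E" using Nprops[OF nu'N] U(3) by auto
      then obtain mu xi where "mu \<in> E" "path_le TL r s cmp nu' xi" "path_le TL r s cmp mu xi"
        using Eex'[OF nu'L] by blast
      then obtain al where "al \<in> E'" "r al = s nu'"
        using key[OF nu'N gaL rga[symmetric]] cg by auto
      then show "v \<in> r ` E'" using nu'(2) by force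
    qed
    have slam': "s lam' \<in> s ` V" using nu VN(3) cmp_props(3)[OF nu(1,2,3)] by auto
    obtain al where al: "al \<in> E'" "s lam' = r al" "cmp lam' al \<in> A"
      using ext' E'c E'ex sV slam' nbh unfolding extendable_def by blast
    have ral: "r al = s nu" using al(2) nu(4) cmp_props(3)[OF nu(1,2,3)] by simp
    have "sig (r al) = nu" unfolding ral using sigN VN(3,4) by blast
    then obtain mu where mu: "mu \<in> E" "path_le TL r s cmp mu (cmp nu al)"
      using al(1) unfolding E'_def by auto
    then obtain be where be: "mu \<in> L" "be \<in> L" "s mu = r be" "cmp nu al = cmp mu be"
      by (auto elim: path_leE)
    have alL: "al \<in> L" using al(1) E'L by blast
    have snu: "s nu = r al" using al(2) nu(4) cmp_props(3)[OF nu(1,2,3)] by simp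
    have rmu: "r mu = s lam"
      using cmp_props(2)[OF be(1-3)] cmp_props(2)[OF nu(2) alL snu] be(4) nu(3) by simp
    have "cmp lam' al = cmp lam (cmp nu al)" using nu(4) assoc[OF nu(1,2) alL nu(3) snu] by simp
    also have "\<dots> = cmp (cmp lam mu) be" using be(4) assoc[OF nu(1) be(1,2) rmu[symmetric] be(3)] by simp
    finally have "path_le TL r s cmp (cmp lam mu) (cmp lam' al)"
      using cmp_props[OF nu(1) be(1) rmu[symmetric]] be by (intro path_leI) auto
    then have "cmp lam mu \<in> A" using hered al(3) by blast
    then show "\<exists>mu\<in>E. s lam = r mu \<and> cmp lam mu \<in> A" using mu(1) rmu by (intro bexI[of _ mu]) simp_all
  qed
qed

end

theorem lemma6p15:
  fixes P :: "'q::group_add set"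
    and TL T0 :: "'l topology"
    and r s :: "'l \<Rightarrow> 'l"
    and cmp :: "'l \<Rightarrow> 'l \<Rightarrow> 'l"
    and d :: "'l \<Rightarrow> 'q"
  assumes "quasi_lattice_ordered P"
    and "top_P_graph P TL T0 r s cmp d"
    and "rd_proper P TL T0 r d"
    and "A \<in> path_space TL r s cmp"
    and "lam' \<in> A"
    and "extendable TL T0 r s cmp A lam'"
    and "lam \<in> topspace TL"
    and "path_le TL r s cmp lam lam'"
  shows "extendable TL T0 r s cmp A lam"
proof -
  interpret PG P TL T0 r s cmp d using assms(1,2) by unfold_locales
  show ?thesis using main assms(3,4,6,8) by blast
qed

end
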